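(* Let $G=(\Gamma,s)$ be a connected rooted graph. The map $c\mapsto \mathbf{deg}-c$ is a bijection from $\mathrm{SR}(G)$ to $\mathrm{PPF}(G)$; equivalently, for a configuration $c:\tilde V\to\mathbb{Z}$, we have $c\in\mathrm{SR}(G)$ if and only if $\mathbf{deg}-c\in\mathrm{PPF}(G)$, where $\mathbf{deg}:\tilde V\to\mathbb{N}$, $v\mapsto\deg(v)$.
   Context: $\mathbb{N}=\{1,2,\dots\}$. A rooted graph $G=(\Gamma,s)$ is a finite undirected multigraph without loops with a distinguished vertex $s$ (the sink), possibly disconnected for subgraphs below; $V$ is its vertex set, $\tilde V=V\setminus\{s\}$. $\mathrm{mult}(vw)$ is the number of edges between $v,w$; $\deg^A(v)=\sum_{w\in A}\mathrm{mult}(vw)$ for $A\subseteq V$, $\deg(v)=\deg^V(v)$. $\mathbf 1_w$ is the indicator function of $w$. Parking side: a $G$-parking function is $p:\tilde V\to\mathbb{N}$ such that for every nonempty $S\subseteq\tilde V$ there is $v\in S$ with $p(v)\le\deg^{V\setminus S}(v)$; $\mathrm{PF}(G)$ is their set. For $A\subseteq\tilde V$, $G^A$ is the induced subgraph on $A\cup\{s\}$ rooted at $s$. For an ordered pair $(A,B)$ of nonempty disjoint sets with $A\cup B=\tilde V$ and $p\in\mathrm{PF}(G)$, $p^A(v)=p(v)$ ($v\in A$) and $p^B(v)=p(v)-\deg^A(v)$ ($v\in B$); $p$ is decomposable w.r.t. $(A,B)$ if $p^A\in\mathrm{PF}(G^A)$ and $p^B\in\mathrm{PF}(G^B)$; $p$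 is prime if it is decomposable w.r.t. no such $(A,B)$; $\mathrm{PPF}(G)$ is the set of prime $G$-parking functions. Sandpile side: a configuration is $c:\tilde V\to\mathbb{Z}$; stable if $c(v)<\deg(v)$ for all $v$. A stable $c$ is recurrent if there is no nonempty $F\subseteq\tilde V$ with $c(v)<\deg^F(v)$ for all $v\in F$; $\mathrm{Rec}(G)$ is their set. $V_M(c)=\{v\in\tilde V: c(v)\ge\deg(v)-\mathrm{mult}(vs)\}$; $c^{v-}=c-\sum_{w\in\tilde V\setminus\{v\}}\mathrm{mult}(ws)\mathbf 1_w$. $c\in\mathrm{Rec}(G)$ is strongly recurrent if $c^{v-}\in\mathrm{Rec}(G)$ for all $v\in V_M(c)$; $\mathrm{SR}(G)$ is their set. *)

theory Defs
  imports Main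
begin

text \<open>A rooted multigraph without loops: a finite vertex set V, a sink s \<in> V and a
  symmetric edge-multiplicity function mult with mult v v = 0.  Subgraphs induced on
  a subset X of V use the same mult, with degrees computed within X.\<close>

definition rooted_graph :: "'a set \<Rightarrow> 'a \<Rightarrow> ('a \<Rightarrow> 'a \<Rightarrow> nat) \<Rightarrow> bool" where
  "rooted_graph V s mult \<longleftrightarrow> finite V \<and> s \<in> V \<and>
     (\<forall>v w. mult v w = mult w v) \<and> (\<forall>v. mult v v = 0)"

definition edge_rel :: "'a set \<Rightarrow> ('a \<Rightarrow> 'a \<Rightarrow> nat) \<Rightarrow> ('a \<times> 'a) set" where
  "edge_rel V mult = {(v, w). v \<in> V \<and> w \<in> V \<and> mult v w > 0}"

definition connected_graph :: "'a set \<Rightarrow> ('a \<Rightarrow> 'a \<Rightarrow> nat) \<Rightarrow> bool" where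
  "connected_graph V mult \<longleftrightarrow> (\<forall>v\<in>V. \<forall>w\<in>V. (v, w) \<in> (edge_rel V mult)\<^sup>*)"

definition deg_in :: "('a \<Rightarrow> 'a \<Rightarrow> nat) \<Rightarrow> 'a set \<Rightarrow> 'a \<Rightarrow> nat" where
  "deg_in mult A v = (\<Sum>w\<in>A. mult v w)"

definition is_PF :: "'a set \<Rightarrow> 'a \<Rightarrow> ('a \<Rightarrow> 'a \<Rightarrow> nat) \<Rightarrow> ('a \<Rightarrow> int) \<Rightarrow> bool" where
  "is_PF V s mult p \<longleftrightarrow> (\<forall>v\<in>V - {s}. p v \<ge> 1) \<and>
     (\<forall>S. S \<subseteq> V - {s} \<and> S \<noteq> {} \<longrightarrow> (\<exists>v\<in>S. p v \<le> int (deg_in mult (V - S) v)))"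

definition decomposable :: "'a set \<Rightarrow> 'a \<Rightarrow> ('a \<Rightarrow> 'a \<Rightarrow> nat) \<Rightarrow> ('a \<Rightarrow> int) \<Rightarrow> 'a set \<Rightarrow> 'a set \<Rightarrow> bool" where
  "decomposable V s mult p A B \<longleftrightarrow>
     is_PF (A \<union> {s}) s mult p \<and>
     is_PF (B \<union> {s}) s mult (\<lambda>v. p v - int (deg_in mult A v))"

definition is_PPF :: "'a set \<Rightarrow> 'a \<Rightarrow> ('a \<Rightarrow> 'a \<Rightarrow> nat) \<Rightarrow> ('a \<Rightarrow> int) \<Rightarrow> bool" where
  "is_PPF V s mult p \<longleftrightarrow> is_PF V s mult p \<and>
     \<not> (\<exists>A B. A \<noteq> {} \<and> B \<noteq> {} \<and> A \<inter> B = {} \<and> A \<union> B = V - {s} \<and>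
            decomposable V s mult p A B)"

definition stable :: "'a set \<Rightarrow> 'a \<Rightarrow> ('a \<Rightarrow> 'a \<Rightarrow> nat) \<Rightarrow> ('a \<Rightarrow> int) \<Rightarrow> bool" where
  "stable V s mult c \<longleftrightarrow> (\<forall>v\<in>V - {s}. c v < int (deg_in mult V v))"

definition recurrent :: "'a set \<Rightarrow> 'a \<Rightarrow> ('a \<Rightarrow> 'a \<Rightarrow> nat) \<Rightarrow> ('a \<Rightarrow> int) \<Rightarrow> bool" where
  "recurrent V s mult c \<longleftrightarrow> stable V s mult c \<and>
     \<not> (\<exists>F. F \<noteq> {} \<and> F \<subseteq> V - {s} \<and> (\<forall>v\<in>F. c v < int (deg_in mult F v)))"

definition VM :: "'a set \<Rightarrow> 'a \<Rightarrow> ('a \<Rightarrow> 'a \<Rightarrow> nat) \<Rightarrow> ('a \<Rightarrow> int) \<Rightarrow> 'a set" where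
  "VM V s mult c = {v \<in> V - {s}. c v \<ge> int (deg_in mult V v) - int (mult v s)}"

definition minus_conf :: "'a set \<Rightarrow> 'a \<Rightarrow> ('a \<Rightarrow> 'a \<Rightarrow> nat) \<Rightarrow> ('a \<Rightarrow> int) \<Rightarrow> 'a \<Rightarrow> ('a \<Rightarrow> int)" where
  "minus_conf V s mult c v =
     (\<lambda>w. c w - (if w \<in> V - {s} \<and> w \<noteq> v then int (mult w s) else 0))"

definition strongly_recurrent :: "'a set \<Rightarrow> 'a \<Rightarrow> ('a \<Rightarrow> 'a \<Rightarrow> nat) \<Rightarrow> ('a \<Rightarrow> int) \<Rightarrow> bool" where
  "strongly_recurrent V s mult c \<longleftrightarrow> recurrent V s mult c \<and>
     (\<forall>v\<in>VM V s mult c. recurrent V s mult (minus_conf V s mult c v))"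

end

theory Submission
  imports Defs
begin

lemma deg_split:
  assumes "finite V" "S \<subseteq> V"
  shows "int (deg_in mult (V - S) v) = int (deg_in mult V v) - int (deg_in mult S v)"
  using sum.subset_diff[OF assms(2) assms(1), of "\<lambda>w. mult v w"]
  unfolding deg_in_def by simp

lemma deg_union:
  assumes "finite X" "finite Y" "X \<inter> Y = {}"
  shows "deg_in mult (X \<union> Y) v = deg_in mult X v + deg_in mult Y v"
  unfolding deg_in_def using sum.union_disjoint[OF assms] by simp

lemma deg_mono:
  assumes "finite Y" "X \<subseteq> Y"
  shows "deg_in mult X v \<le> deg_in mult Y v"
  unfolding deg_in_def by (rule sum_mono2[OF assms]) auto

lemma deg_single: "deg_in mult {s} v = mult v s"
  unfolding deg_in_def by simp

lemma rg_fin: "rooted_graph V s mult \<Longrightarrow> finite V"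
  unfolding rooted_graph_def by (erule conjunct1)

lemma rg_s: "rooted_graph V s mult \<Longrightarrow> s \<in> V"
  unfolding rooted_graph_def by (erule conjunct2[THEN conjunct1])

lemma PF_rec:
  assumes "finite V"
  shows "is_PF V s mult (\<lambda>v. int (deg_in mult V v) - c v) \<longleftrightarrow> recurrent V s mult c"
proof -
  have e: "\<And>S v. S \<subseteq> V - {s} \<Longrightarrow> int (deg_in mult (V - S) v) = int (deg_in mult V v) - int (deg_in mult S v)"
    by (rule deg_split[OF assms]) auto
  have 1: "(\<forall>v\<in>V - {s}. 1 \<le> int (deg_in mult V v) - c v) \<longleftrightarrow> stable V s mult c"
    unfolding stable_def by (meson ball_cong int_one_le_iff_zero_less diff_gt_0_iff_gt)
  have 3: "\<And>S. S \<subseteq> V - {s} \<Longrightarrow> (\<exists>v\<in>S. int (deg_in mult V v) - c v \<le> int (deg_in mult (V - S) v))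
           \<longleftrightarrow> (\<exists>v\<in>S. \<not> c v < int (deg_in mult S v))"
  proof -
    fix S assume S: "S \<subseteq> V - {s}"
    have "\<And>v. (int (deg_in mult V v) - c v \<le> int (deg_in mult (V - S) v)) \<longleftrightarrow> \<not> c v < int (deg_in mult S v)"
      using e[OF S] by (simp add: not_less)
    then show "(\<exists>v\<in>S. int (deg_in mult V v) - c v \<le> int (deg_in mult (V - S) v))
           \<longleftrightarrow> (\<exists>v\<in>S. \<not> c v < int (deg_in mult S v))" by simp
  qed
  have 2: "(\<forall>S. S \<subseteq> V - {s} \<and> S \<noteq> {} \<longrightarrow> (\<exists>v\<in>S. int (deg_in mult V v) - c v \<le> int (deg_in mult (V - S) v)))
     \<longleftrightarrow> \<not> (\<exists>F. F \<noteq> {} \<and> F \<subseteq> V - {s} \<and> (\<forall>v\<in>F. c v < int (deg_in mult F v)))"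
  proof
    assume L: "\<forall>S. S \<subseteq> V - {s} \<and> S \<noteq> {} \<longrightarrow> (\<exists>v\<in>S. int (deg_in mult V v) - c v \<le> int (deg_in mult (V - S) v))"
    show "\<not> (\<exists>F. F \<noteq> {} \<and> F \<subseteq> V - {s} \<and> (\<forall>v\<in>F. c v < int (deg_in mult F v)))"
    proof
      assume "\<exists>F. F \<noteq> {} \<and> F \<subseteq> V - {s} \<and> (\<forall>v\<in>F. c v < int (deg_in mult F v))"
      then obtain F where F: "F \<noteq> {}" "F \<subseteq> V - {s}" "\<forall>v\<in>F. c v < int (deg_in mult F v)" by blast
      then have "\<exists>v\<in>F. \<not> c v < int (deg_in mult F v)" using L 3[OF F(2)] by blast
      then show False using F(3) by blast
    qed
  next
    assume R: "\<not> (\<exists>F. F \<noteq> {} \<and> F \<subseteq> V - {s} \<and> (\<forall>v\<in>F. c v < int (deg_in mult F v)))"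
    show "\<forall>S. S \<subseteq> V - {s} \<and> S \<noteq> {} \<longrightarrow> (\<exists>v\<in>S. int (deg_in mult V v) - c v \<le> int (deg_in mult (V - S) v))"
    proof (intro allI impI)
      fix S assume S: "S \<subseteq> V - {s} \<and> S \<noteq> {}"
      then have "\<exists>v\<in>S. \<not> c v < int (deg_in mult S v)" using R by blast
      then show "\<exists>v\<in>S. int (deg_in mult V v) - c v \<le> int (deg_in mult (V - S) v)" using 3 S by blast
    qed
  qed
  show ?thesis unfolding is_PF_def recurrent_def by (simp only: 1 2)
qed

lemma decA:
  assumes "finite V" "s \<in> V" "A \<inter> B = {}" "A \<union> B = V - {s}"
  shows "is_PF (A \<union> {s}) s mult (\<lambda>v. int (deg_in mult V v) - c v) \<longleftrightarrow>
    (\<forall>v\<in>A. c v < int (deg_in mult V v)) \<and>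
    (\<forall>S. S \<subseteq> A \<and> S \<noteq> {} \<longrightarrow> (\<exists>v\<in>S. int (deg_in mult (S \<union> B) v) \<le> c v))"
proof -
  have sA: "s \<notin> A" using assms by blast
  have e: "\<And>S v. S \<subseteq> A \<Longrightarrow> int (deg_in mult ((A \<union> {s}) - S) v) = int (deg_in mult V v) - int (deg_in mult (S \<union> B) v)"
  proof -
    fix S v assume "S \<subseteq> A"
    then have "(A \<union> {s}) - S = V - (S \<union> B)" "S \<union> B \<subseteq> V" using assms by auto
    then show "int (deg_in mult ((A \<union> {s}) - S) v) = int (deg_in mult V v) - int (deg_in mult (S \<union> B) v)"
      using deg_split[OF assms(1)] by metis
  qed
  have "(A \<union> {s}) - {s} = A" using sA by blast
  then show ?thesis unfolding is_PF_def using e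
    by (smt (verit, ccfv_threshold))
qed

lemma decB:
  assumes "finite V" "s \<in> V" "A \<inter> B = {}" "A \<union> B = V - {s}"
  shows "is_PF (B \<union> {s}) s mult (\<lambda>v. int (deg_in mult V v) - c v - int (deg_in mult A v)) \<longleftrightarrow>
    (\<forall>v\<in>B. c v < int (deg_in mult (B \<union> {s}) v)) \<and>
    (\<forall>S. S \<subseteq> B \<and> S \<noteq> {} \<longrightarrow> (\<exists>v\<in>S. int (deg_in mult S v) \<le> c v))"
proof -
  have sB: "s \<notin> B" using assms by blast
  have fA: "finite A" "finite B" using assms by (metis finite_Diff finite_Un)+
  have e1: "\<And>v. int (deg_in mult (B \<union> {s}) v) = int (deg_in mult V v) - int (deg_in mult A v)"
  proof -
    fix v
    have "B \<union> {s} = V - A" "A \<subseteq> V" using assms by auto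
    then show "int (deg_in mult (B \<union> {s}) v) = int (deg_in mult V v) - int (deg_in mult A v)"
      using deg_split[OF assms(1)] by metis
  qed
  have e: "\<And>S v. S \<subseteq> B \<Longrightarrow> int (deg_in mult ((B \<union> {s}) - S) v) = int (deg_in mult V v) - int (deg_in mult A v) - int (deg_in mult S v)"
  proof -
    fix S v assume S: "S \<subseteq> B"
    then have "(B \<union> {s}) - S = V - (A \<union> S)" "A \<union> S \<subseteq> V" using assms by auto
    moreover have "deg_in mult (A \<union> S) v = deg_in mult A v + deg_in mult S v"
      using deg_union[of A S] fA S assms(3) finite_subset[OF S] by blast
    ultimately show "int (deg_in mult ((B \<union> {s}) - S) v) = int (deg_in mult V v) - int (deg_in mult A v) - int (deg_in mult S v)"
      using deg_split[OF assms(1)] by (metis diff_diff_eq of_nat_add)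
  qed
  have "(B \<union> {s}) - {s} = B" using sB by blast
  then show ?thesis unfolding is_PF_def using e e1
    by (smt (verit, ccfv_threshold))
qed


theorem theorem2p11:
  fixes V :: "'a set" and s :: 'a and mult :: "'a \<Rightarrow> 'a \<Rightarrow> nat" and c :: "'a \<Rightarrow> int"
  assumes "rooted_graph V s mult"
    and "connected_graph V mult"
  shows "strongly_recurrent V s mult c \<longleftrightarrow>
         is_PPF V s mult (\<lambda>v. int (deg_in mult V v) - c v)"
proof (cases "recurrent V s mult c")
  case False
  have "finite V" using rg_fin[OF assms(1)] .
  then have "\<not> is_PF V s mult (\<lambda>v. int (deg_in mult V v) - c v)" using PF_rec[of V s mult c] False by simp
  then show ?thesis using False unfolding strongly_recurrent_def is_PPF_def by simp
next
  case rec: True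
  have fin: "finite V" and sV: "s \<in> V" using rg_fin[OF assms(1)] rg_s[OF assms(1)] by -
  define T where "T = V - {s}"
  have finT: "finite T" using fin T_def by simp
  have PF: "is_PF V s mult (\<lambda>v. int (deg_in mult V v) - c v)" using PF_rec[OF fin] rec by simp
  have dT: "\<And>v. int (deg_in mult T v) = int (deg_in mult V v) - int (mult v s)"
    using deg_split[OF fin, of "{s}"] deg_single sV unfolding T_def by simp
  have stab: "stable V s mult c" using rec unfolding recurrent_def by (rule conjunct1)
  have mc_rec: "\<And>v. recurrent V s mult (minus_conf V s mult c v) \<longleftrightarrow>
     \<not> (\<exists>F. F \<noteq> {} \<and> F \<subseteq> T \<and> (\<forall>w\<in>F. minus_conf V s mult c v w < int (deg_in mult F w)))"
  proof -
    fix v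
    have "stable V s mult (minus_conf V s mult c v)"
      unfolding stable_def
    proof
      fix w assume "w \<in> V - {s}"
      then have "c w < int (deg_in mult V w)" using stab unfolding stable_def by simp
      then show "minus_conf V s mult c v w < int (deg_in mult V w)" unfolding minus_conf_def by simp
    qed
    then show "recurrent V s mult (minus_conf V s mult c v) \<longleftrightarrow>
     \<not> (\<exists>F. F \<noteq> {} \<and> F \<subseteq> T \<and> (\<forall>w\<in>F. minus_conf V s mult c v w < int (deg_in mult F w)))"
      unfolding recurrent_def T_def by blast
  qed
  have dec: "\<And>A B. A \<inter> B = {} \<Longrightarrow> A \<union> B = T \<Longrightarrow>
     decomposable V s mult (\<lambda>v. int (deg_in mult V v) - c v) A B \<longleftrightarrow>
     (\<forall>v\<in>B. c v < int (deg_in mult (B \<union> {s}) v)) \<and>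
     (\<forall>S. S \<subseteq> A \<and> S \<noteq> {} \<longrightarrow> (\<exists>v\<in>S. int (deg_in mult (S \<union> B) v) \<le> c v))"
  proof -
    fix A B assume AB: "A \<inter> B = {}" "A \<union> B = T"
    have sub: "A \<union> B = V - {s}" using AB T_def by simp
    have cA: "\<forall>v\<in>A. c v < int (deg_in mult V v)"
    proof
      fix v assume "v \<in> A"
      then have "v \<in> V - {s}" using sub by auto
      then show "c v < int (deg_in mult V v)" using stab unfolding stable_def by simp
    qed
    have cB: "\<forall>S. S \<subseteq> B \<and> S \<noteq> {} \<longrightarrow> (\<exists>v\<in>S. int (deg_in mult S v) \<le> c v)"
    proof (intro allI impI)
      fix S assume S: "S \<subseteq> B \<and> S \<noteq> {}"
      then have "S \<subseteq> V - {s}" using sub by auto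
      then have "\<not> (\<forall>v\<in>S. c v < int (deg_in mult S v))" using rec S unfolding recurrent_def by auto
      then show "\<exists>v\<in>S. int (deg_in mult S v) \<le> c v" by (auto simp: not_less)
    qed
    show "decomposable V s mult (\<lambda>v. int (deg_in mult V v) - c v) A B \<longleftrightarrow>
     (\<forall>v\<in>B. c v < int (deg_in mult (B \<union> {s}) v)) \<and>
     (\<forall>S. S \<subseteq> A \<and> S \<noteq> {} \<longrightarrow> (\<exists>v\<in>S. int (deg_in mult (S \<union> B) v) \<le> c v))"
      unfolding decomposable_def decA[OF fin sV AB(1) sub, of mult c] decB[OF fin sV AB(1) sub, of mult c]
      using cA cB by simp (rule conj_commute)
  qed
  show ?thesis
  proof
    assume SR: "strongly_recurrent V s mult c"
    show "is_PPF V s mult (\<lambda>v. int (deg_in mult V v) - c v)"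
      unfolding is_PPF_def
    proof (intro conjI PF notI)
      assume "\<exists>A B. A \<noteq> {} \<and> B \<noteq> {} \<and> A \<inter> B = {} \<and> A \<union> B = V - {s} \<and>
            decomposable V s mult (\<lambda>v. int (deg_in mult V v) - c v) A B"
      then obtain A B where AB: "A \<noteq> {}" "B \<noteq> {}" "A \<inter> B = {}" "A \<union> B = V - {s}"
        and D: "decomposable V s mult (\<lambda>v. int (deg_in mult V v) - c v) A B" by blast
      have AB4: "A \<union> B = T" using AB(4) T_def by simp
      have i: "\<forall>v\<in>B. c v < int (deg_in mult (B \<union> {s}) v)"
        and ii: "\<forall>S. S \<subseteq> A \<and> S \<noteq> {} \<longrightarrow> (\<exists>v\<in>S. int (deg_in mult (S \<union> B) v) \<le> c v)"
        using dec[OF AB(3) AB4] D by simp_all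
      obtain v where v: "v \<in> A" "int (deg_in mult T v) \<le> c v" using ii AB AB4 by blast
      have vVM: "v \<in> VM V s mult c" unfolding VM_def using v dT AB(4) by auto
      have fB: "finite B" using finT AB4 by (metis finite_Un)
      have sB: "s \<notin> B" using AB(4) by blast
      have "\<forall>w\<in>B. minus_conf V s mult c v w < int (deg_in mult B w)"
      proof
        fix w assume w: "w \<in> B"
        have "deg_in mult (B \<union> {s}) w = deg_in mult B w + mult w s"
          using deg_union[OF fB, of "{s}"] sB deg_single by simp
        moreover have "w \<in> V - {s} \<and> w \<noteq> v" using w AB(3,4) v by blast
        moreover have "c w < int (deg_in mult (B \<union> {s}) w)" using i w by blast
        ultimately show "minus_conf V s mult c v w < int (deg_in mult B w)"
          unfolding minus_conf_def by simp
      qed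
      moreover have "B \<subseteq> T" using AB4 by blast
      ultimately have "\<exists>F. F \<noteq> {} \<and> F \<subseteq> T \<and> (\<forall>w\<in>F. minus_conf V s mult c v w < int (deg_in mult F w))"
        using AB(2) by blast
      then have "\<not> recurrent V s mult (minus_conf V s mult c v)"
        using mc_rec[of v] by simp
      moreover have "recurrent V s mult (minus_conf V s mult c v)"
        using SR vVM unfolding strongly_recurrent_def by simp
      ultimately show False by contradiction
    qed
  next
    assume PPF: "is_PPF V s mult (\<lambda>v. int (deg_in mult V v) - c v)"
    show "strongly_recurrent V s mult c"
      unfolding strongly_recurrent_def
    proof (intro conjI rec ballI)
      fix v assume vVM: "v \<in> VM V s mult c"
      then have vT: "v \<in> T" and cv0: "int (deg_in mult V v) - int (mult v s) \<le> c v"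
        unfolding VM_def T_def by auto
      have cv: "int (deg_in mult T v) \<le> c v" using cv0 dT[of v] by linarith
      show "recurrent V s mult (minus_conf V s mult c v)"
      proof (rule ccontr)
        assume "\<not> recurrent V s mult (minus_conf V s mult c v)"
        then obtain F where F: "F \<noteq> {}" "F \<subseteq> T"
          "\<forall>w\<in>F. minus_conf V s mult c v w < int (deg_in mult F w)" using mc_rec[of v] by auto
        have vF: "v \<notin> F"
        proof
          assume "v \<in> F"
          then have "minus_conf V s mult c v v < int (deg_in mult F v)" using F(3) by blast
          then have "c v < int (deg_in mult F v)" unfolding minus_conf_def by simp
          moreover have "deg_in mult F v \<le> deg_in mult T v" using deg_mono[OF finT F(2)] .
          ultimately show False using cv by linarith
        qed
        have dFs: "\<And>X w. X \<subseteq> T \<Longrightarrow> deg_in mult (X \<union> {s}) w = deg_in mult X w + mult w s"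
        proof -
          fix X w assume "X \<subseteq> T"
          then have "finite X" "X \<inter> {s} = {}" using finite_subset[OF _ finT] unfolding T_def by auto
          then show "deg_in mult (X \<union> {s}) w = deg_in mult X w + mult w s"
            using deg_union[of X "{s}"] deg_single by simp
        qed
        define P where "P Y \<longleftrightarrow> Y \<subseteq> T - {v} \<and> (\<forall>w\<in>Y. c w < int (deg_in mult (Y \<union> {s}) w))" for Y
        define B where "B = \<Union>{Y. P Y}"
        have PF': "P F"
          unfolding P_def
        proof
          show "F \<subseteq> T - {v}" using F vF by blast
          show "\<forall>w\<in>F. c w < int (deg_in mult (F \<union> {s}) w)"
          proof
            fix w assume w: "w \<in> F"
            then have "w \<in> V - {s} \<and> w \<noteq> v" using F vF T_def by blast
            moreover have "minus_conf V s mult c v w < int (deg_in mult F w)" using F(3) w by blast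
            ultimately show "c w < int (deg_in mult (F \<union> {s}) w)"
              using dFs[OF F(2), of w] unfolding minus_conf_def by simp
          qed
        qed
        have Bsup: "\<And>Y. P Y \<Longrightarrow> Y \<subseteq> B" unfolding B_def by blast
        have BT: "B \<subseteq> T - {v}" unfolding B_def P_def by blast
        have finBs: "finite (B \<union> {s})" using finite_subset[OF _ finT] BT by blast
        have PB: "P B"
          unfolding P_def
        proof
          show "B \<subseteq> T - {v}" by (rule BT)
          show "\<forall>w\<in>B. c w < int (deg_in mult (B \<union> {s}) w)"
          proof
            fix w assume "w \<in> B"
            then obtain Y where Y: "P Y" "w \<in> Y" unfolding B_def by blast
            then have "Y \<union> {s} \<subseteq> B \<union> {s}" unfolding B_def by blast
            then have "deg_in mult (Y \<union> {s}) w \<le> deg_in mult (B \<union> {s}) w"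
              using deg_mono[OF finBs] by blast
            moreover have "c w < int (deg_in mult (Y \<union> {s}) w)" using Y unfolding P_def by blast
            ultimately show "c w < int (deg_in mult (B \<union> {s}) w)" by linarith
          qed
        qed
        have Bne: "B \<noteq> {}" using PF' F unfolding B_def by blast
        define A where "A = T - B"
        have vA: "v \<in> A" using vT BT A_def by blast
        have AB: "A \<inter> B = {}" "A \<union> B = T" using A_def BT by auto
        have i: "\<forall>w\<in>B. c w < int (deg_in mult (B \<union> {s}) w)" using PB P_def by blast
        have ii: "\<forall>S. S \<subseteq> A \<and> S \<noteq> {} \<longrightarrow> (\<exists>w\<in>S. int (deg_in mult (S \<union> B) w) \<le> c w)"
        proof (intro allI impI)
          fix S assume S: "S \<subseteq> A \<and> S \<noteq> {}"
          show "\<exists>w\<in>S. int (deg_in mult (S \<union> B) w) \<le> c w"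
          proof (rule ccontr)
            assume "\<not> (\<exists>w\<in>S. int (deg_in mult (S \<union> B) w) \<le> c w)"
            then have lt: "\<forall>w\<in>S. c w < int (deg_in mult (S \<union> B) w)" by auto
            have SBT: "S \<union> B \<subseteq> T" using S AB by blast
            have finSB: "finite (S \<union> B \<union> {s})" using finite_subset[OF _ finT] SBT by blast
            show False
            proof (cases "v \<in> S")
              case True
              have "deg_in mult (S \<union> B) v \<le> deg_in mult T v" using deg_mono[OF finT SBT] .
              moreover have "c v < int (deg_in mult (S \<union> B) v)" using lt True by blast
              ultimately show False using cv by linarith
            next
              case False
              have "P (S \<union> B)"
                unfolding P_def
              proof
                show "S \<union> B \<subseteq> T - {v}" using SBT False BT by blast
                show "\<forall>w\<in>S \<union> B. c w < int (deg_in mult (S \<union> B \<union> {s}) w)"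
                proof
                  fix w assume w: "w \<in> S \<union> B"
                  have m1: "deg_in mult (S \<union> B) w \<le> deg_in mult (S \<union> B \<union> {s}) w"
                    by (rule deg_mono[OF finSB]) blast
                  have m2: "deg_in mult (B \<union> {s}) w \<le> deg_in mult (S \<union> B \<union> {s}) w"
                    by (rule deg_mono[OF finSB]) blast
                  show "c w < int (deg_in mult (S \<union> B \<union> {s}) w)"
                  proof (cases "w \<in> S")
                    case True then have "c w < int (deg_in mult (S \<union> B) w)" using lt by blast
                    then show ?thesis using m1 by linarith
                  next
                    case False then have "w \<in> B" using w by blast
                    then have "c w < int (deg_in mult (B \<union> {s}) w)" using i by blast
                    then show ?thesis using m2 by linarith
                  qed
                qed
              qed
              then have "S \<union> B \<subseteq> B" by (rule Bsup)
              then have "S \<subseteq> B" by blast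
              then show False using S AB by blast
            qed
          qed
        qed
        have D: "decomposable V s mult (\<lambda>v. int (deg_in mult V v) - c v) A B"
          using dec[OF AB] i ii by blast
        have "A \<noteq> {}" using vA by blast
        moreover have "A \<union> B = V - {s}" using AB(2) T_def by simp
        ultimately have "\<exists>A B. A \<noteq> {} \<and> B \<noteq> {} \<and> A \<inter> B = {} \<and> A \<union> B = V - {s} \<and>
            decomposable V s mult (\<lambda>v. int (deg_in mult V v) - c v) A B" using D AB(1) Bne by blast
        then show False using PPF unfolding is_PPF_def by simp
      qed
    qed
  qed
qed

end
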